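(* Let $d\ge1$ and $K^\infty(t)=\frac{1}{2\pi}\,t\,(\pi-\arccos t)$ for $t\in[-1,1]$. For every spherical harmonic $Y$ on $\mathbb{S}^d$ of odd degree $k\ge3$, $$\int_{\mathbb{S}^d}K^\infty(\mathbf{u}^T\mathbf{v})\,Y(\mathbf{v})\,d\mathbf{v}=0\quad\text{for all }\mathbf{u}\in\mathbb{S}^d,$$ i.e. the eigenvalues of convolution with $K^\infty$ corresponding to odd harmonics of degree $k\ge3$ vanish.
   Context: $\mathbb{S}^d$ is the unit sphere in $\mathbb{R}^{d+1}$ with surface measure $d\mathbf{v}$. A spherical harmonic of degree $k$ is the restriction to $\mathbb{S}^d$ of a homogeneous harmonic polynomial of degree $k$ on $\mathbb{R}^{d+1}$. Note $K^\infty(\mathbf{x}^T\mathbf{y})$ is proportional to $\mathbb{E}_{\mathbf{w}}[\mathbb{1}\{\mathbf{w}^T\mathbf{x}>0\}\mathbb{1}\{\mathbf{w}^T\mathbf{y}>0\}]\,\mathbf{x}^T\mathbf{y}$ for $\mathbf{w}$ Gaussian (equivalently uniform on the sphere). *)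

theory Defs
  imports "HOL-Analysis.Analysis"
begin

text \<open>Ambient space R^(d+1) is real^'n with CARD('n) = d+1.\<close>

definition homogeneous_poly :: "nat \<Rightarrow> (real^'n::finite \<Rightarrow> real) \<Rightarrow> bool" where
  "homogeneous_poly k P \<longleftrightarrow>
     (\<exists>(A :: ('n \<Rightarrow> nat) set) (c :: ('n \<Rightarrow> nat) \<Rightarrow> real).
        finite A \<and> (\<forall>\<alpha>\<in>A. (\<Sum>i\<in>UNIV. \<alpha> i) = k) \<and>
        (\<forall>x. P x = (\<Sum>\<alpha>\<in>A. c \<alpha> * (\<Prod>i\<in>UNIV. (x $ i) ^ \<alpha> i))))"

definition second_partial :: "(real^'n::finite \<Rightarrow> real) \<Rightarrow> 'n \<Rightarrow> real^'n \<Rightarrow> real" where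
  "second_partial P i x = (deriv ^^ 2) (\<lambda>t. P (x + t *\<^sub>R axis i 1)) 0"

definition laplacian :: "(real^'n::finite \<Rightarrow> real) \<Rightarrow> real^'n \<Rightarrow> real" where
  "laplacian P x = (\<Sum>i\<in>UNIV. second_partial P i x)"

definition harmonic_homogeneous_poly :: "nat \<Rightarrow> (real^'n::finite \<Rightarrow> real) \<Rightarrow> bool" where
  "harmonic_homogeneous_poly k P \<longleftrightarrow> homogeneous_poly k P \<and> (\<forall>x. laplacian P x = 0)"

definition spherical_harmonic :: "nat \<Rightarrow> (real^'n::finite \<Rightarrow> real) \<Rightarrow> bool" where
  "spherical_harmonic k Y \<longleftrightarrow>
     (\<exists>P. harmonic_homogeneous_poly k P \<and> (\<forall>v\<in>sphere 0 1. Y v = P v))"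

text \<open>Surface measure on the unit sphere, via the cone construction:
  sigma(E) = n * Leb{ x in ball 0 1 - {0} : x/|x| in E }, n = dimension of ambient space.\<close>
definition sphere_surface :: "(real^'n::finite) measure" where
  "sphere_surface =
     distr (density (restrict_space lborel (ball 0 1 - {0})) (\<lambda>_. ennreal (real CARD('n))))
           (restrict_space borel (sphere 0 1)) (\<lambda>x. x /\<^sub>R norm x)"

definition Kinf :: "real \<Rightarrow> real" where
  "Kinf t = 1 / (2 * pi) * t * (pi - arccos t)"

end

theory Submission
  imports Defs "HOL-Library.Countable"
begin



typedef 'a wo = "UNIV :: 'a set" by auto

instantiation wo :: (finite) linorder
begin
definition less_eq_wo :: "'a wo \<Rightarrow> 'a wo \<Rightarrow> bool" where
  "less_eq_wo x y \<longleftrightarrow> to_nat (Rep_wo x) \<le> to_nat (Rep_wo y)"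
definition less_wo :: "'a wo \<Rightarrow> 'a wo \<Rightarrow> bool" where
  "less_wo x y \<longleftrightarrow> to_nat (Rep_wo x) < to_nat (Rep_wo y)"
instance proof
  fix x y z :: "'a wo"
  show "x < y \<longleftrightarrow> x \<le> y \<and> \<not> y \<le> x" by (auto simp: less_eq_wo_def less_wo_def)
  show "x \<le> x" by (simp add: less_eq_wo_def)
  show "x \<le> y \<Longrightarrow> y \<le> z \<Longrightarrow> x \<le> z" by (auto simp: less_eq_wo_def)
  show "x \<le> y \<Longrightarrow> y \<le> x \<Longrightarrow> x = y" by (auto simp: less_eq_wo_def Rep_wo_inject)
  show "x \<le> y \<or> y \<le> x" by (auto simp: less_eq_wo_def)
qed

end

instance wo :: (finite) finite
proof
  have "(UNIV :: 'a wo set) = Abs_wo ` UNIV" by (metis Rep_wo_inverse surjI image_eqI UNIV_I subsetI subset_antisym)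
  then show "finite (UNIV :: 'a wo set)" by (metis finite finite_imageI)
qed

instance wo :: (finite) wellorder
proof
  fix P :: "'a wo \<Rightarrow> bool" and a :: "'a wo"
  assume H: "\<And>x. (\<And>y. y < x \<Longrightarrow> P y) \<Longrightarrow> P x"
  have "\<forall>x::'a wo. to_nat (Rep_wo x) = n \<longrightarrow> P x" for n
  proof (induction n rule: less_induct)
    case (less n)
    then show ?case using H by (auto simp: less_wo_def)
  qed
  then show "P a" by blast
qed

lemma prod_Basis_cart:
  "(\<Prod>b\<in>(Basis::(real^'n) set). f b) = (\<Prod>i\<in>UNIV. f (axis i (1::real)))"
proof -
  have B: "(Basis::(real^'n) set) = (\<lambda>i. axis i 1) ` UNIV"
    by (auto simp: Basis_vec_def)
  have "inj (\<lambda>i::'n. axis i (1::real))"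
    by (auto simp: inj_def axis_eq_axis)
  then have "prod f ((\<lambda>i. axis i 1) ` UNIV) = (\<Prod>i\<in>UNIV. f (axis i (1::real)))"
    by (simp add: prod.reindex)
  then show ?thesis by (simp add: B)
qed

definition Phi :: "real^'n \<Rightarrow> real^('n wo)" where
  "Phi x = (\<chi> j. x $ Rep_wo j)"
definition Psi :: "real^('n wo) \<Rightarrow> real^'n" where
  "Psi y = (\<chi> i. y $ Abs_wo i)"

lemma Psi_Phi[simp]: "Psi (Phi x) = x"
  by (simp add: Phi_def Psi_def vec_eq_iff Abs_wo_inverse)
lemma Phi_Psi[simp]: "Phi (Psi y) = y"
  by (simp add: Phi_def Psi_def vec_eq_iff Rep_wo_inverse)

lemma linear_Psi: "linear Psi"
  by (auto simp: linear_iff Psi_def vec_eq_iff)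
lemma linear_Phi: "linear Phi"
  by (auto simp: linear_iff Phi_def vec_eq_iff)

lemma range_Rep_wo: "range Rep_wo = UNIV"
  by (metis Rep_wo_inverse Abs_wo_inverse UNIV_I surjI)
lemma inj_Rep_wo: "inj Rep_wo" by (simp add: Rep_wo_inject inj_on_def)

lemma prod_wo: "(\<Prod>j\<in>UNIV. f (Rep_wo j)) = (\<Prod>i\<in>(UNIV::'n::finite set). f i)"
proof -
  have "prod f (range Rep_wo) = (\<Prod>x\<in>UNIV. f (Rep_wo x))"
    by (rule prod.reindex[OF inj_Rep_wo, unfolded comp_def])
  then show ?thesis by (simp add: range_Rep_wo)
qed

lemma sum_wo: "(\<Sum>j\<in>UNIV. f (Rep_wo j)) = (\<Sum>i\<in>(UNIV::'n::finite set). f i)"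
proof -
  have "sum f (range Rep_wo) = (\<Sum>x\<in>UNIV. f (Rep_wo x))"
    by (rule sum.reindex[OF inj_Rep_wo, unfolded comp_def])
  then show ?thesis by (simp add: range_Rep_wo)
qed

lemma inner_Psi: "Psi x \<bullet> Psi y = x \<bullet> (y :: real^('n::finite wo))"
proof -
  have "Psi x \<bullet> Psi y = (\<Sum>i\<in>UNIV. x $ Abs_wo i * y $ Abs_wo i)"
    by (simp add: inner_vec_def Psi_def)
  also have "\<dots> = (\<Sum>j\<in>UNIV. x $ Abs_wo (Rep_wo j) * y $ Abs_wo (Rep_wo j))"
    by (rule sum_wo[symmetric])
  also have "\<dots> = x \<bullet> y" by (simp add: inner_vec_def Rep_wo_inverse)
  finally show ?thesis .
qed

lemma Psi_measurable[measurable]: "Psi \<in> borel_measurable borel"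
  by (intro borel_measurable_continuous_onI linear_continuous_on)
     (simp add: linear_Psi linear_conv_bounded_linear[symmetric])

lemma Phi_measurable[measurable]: "Phi \<in> borel_measurable borel"
  by (intro borel_measurable_continuous_onI linear_continuous_on)
     (simp add: linear_Phi linear_conv_bounded_linear[symmetric])

lemma distr_Psi: "distr (lborel :: (real^('n::finite wo)) measure) borel Psi = lborel"
proof (rule lborel_eqI[symmetric])
  fix l u :: "real^'n"
  assume le: "\<And>b. b \<in> Basis \<Longrightarrow> l \<bullet> b \<le> u \<bullet> b"
  have pre: "Psi -` box l u = box (Phi l) (Phi u)"
  proof (intro set_eqI iffI)
    fix x assume "x \<in> Psi -` box l u"
    then have "\<forall>i. l $ i < x $ Abs_wo i \<and> x $ Abs_wo i < u $ i" by (simp add: mem_box_cart Psi_def)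
    then show "x \<in> box (Phi l) (Phi u)"
      by (simp add: mem_box_cart Phi_def) (metis Rep_wo_inverse)
  next
    fix x assume "x \<in> box (Phi l) (Phi u)"
    then have "\<forall>i. l $ Rep_wo i < x $ i \<and> x $ i < u $ Rep_wo i" by (simp add: mem_box_cart Phi_def)
    then show "x \<in> Psi -` box l u"
      by (simp add: mem_box_cart Psi_def) (metis Abs_wo_inverse UNIV_I)
  qed
  have li: "l $ i \<le> u $ i" for i using le[of "axis i 1"] by (simp add: inner_axis)
  have "\<forall>b\<in>Basis. Phi l \<bullet> b \<le> Phi u \<bullet> b"
    using li by (auto simp: Basis_vec_def inner_axis Phi_def)
  then have "emeasure lborel (box (Phi l) (Phi u)) = (\<Prod>i\<in>UNIV. (u $ Rep_wo i - l $ Rep_wo i))"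
    by (simp add: emeasure_lborel_box_eq prod_Basis_cart inner_axis Phi_def)
  also have "\<dots> = (\<Prod>b\<in>Basis. (u - l) \<bullet> b)"
    using prod_wo[of "\<lambda>i. u $ i - l $ i"] by (simp add: prod_Basis_cart inner_axis)
  finally show "emeasure (distr lborel borel Psi) (box l u) = (\<Prod>b\<in>Basis. (u - l) \<bullet> b)"
    by (simp add: emeasure_distr pre)
qed simp


lemma orth_measurable[measurable]:
  fixes T :: "'a::euclidean_space \<Rightarrow> 'a"
  assumes "orthogonal_transformation T"
  shows "T \<in> borel_measurable borel"
  using assms by (intro borel_measurable_continuous_onI linear_continuous_on)
     (simp add: orthogonal_transformation_linear linear_conv_bounded_linear[symmetric])

lemma distr_orth_wo:
  fixes T :: "real^('n::finite wo) \<Rightarrow> real^('n wo)"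
  assumes T: "orthogonal_transformation T"
  shows "distr lborel borel T = lborel"
proof (rule lborel_eqI[symmetric])
  fix l u :: "real^('n wo)"
  assume le: "\<And>b. b \<in> Basis \<Longrightarrow> l \<bullet> b \<le> u \<bullet> b"
  let ?B = "box l u"
  have Ti: "orthogonal_transformation (inv T)" using T by (rule orthogonal_transformation_inv)
  have pre: "T -` ?B = inv T ` ?B"
    using orthogonal_transformation_bij[OF T] by (simp add: bij_vimage_eq_inv_image)
  have cT: "continuous_on UNIV T"
    using T by (intro linear_continuous_on) (simp add: orthogonal_transformation_linear linear_conv_bounded_linear[symmetric])
  have opn: "open (T -` ?B)"
    using cT by (simp add: continuous_on_open_vimage open_box)
  have bnd: "bounded (T -` ?B)"
    unfolding pre using Ti
    by (intro bounded_linear_image) (simp_all add: orthogonal_transformation_linear linear_conv_bounded_linear[symmetric])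
  have sb: "T -` ?B \<in> sets borel" using opn by simp
  have lm: "?B \<in> lmeasurable" by simp
  have "measure lebesgue (inv T ` ?B) = measure lebesgue ?B"
    by (rule measure_orthogonal_image[OF Ti lm])
  then have meq: "measure lborel (T -` ?B) = measure lborel ?B"
    using sb by (simp add: pre[symmetric])
  have "emeasure lborel (T -` ?B) = ennreal (measure lborel (T -` ?B))"
    using emeasure_bounded_finite[OF bnd] by (simp add: emeasure_eq_ennreal_measure)
  also have "\<dots> = ennreal (measure lborel ?B)" by (simp add: meq)
  also have "\<dots> = emeasure lborel ?B"
    using emeasure_bounded_finite[of ?B] by (simp add: emeasure_eq_ennreal_measure)
  also have "\<dots> = (\<Prod>b\<in>Basis. (u - l) \<bullet> b)"
    using le by (simp add: emeasure_lborel_box_eq)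
  finally show "emeasure (distr lborel borel T) (box l u) = (\<Prod>b\<in>Basis. (u - l) \<bullet> b)"
    using T by (simp add: emeasure_distr)
qed simp

lemma distr_orth:
  fixes R :: "real^('n::finite) \<Rightarrow> real^'n"
  assumes R: "orthogonal_transformation R"
  shows "distr lborel borel R = lborel"
proof -
  define T where "T = (\<lambda>y. Phi (R (Psi y)))"
  have T: "orthogonal_transformation T"
    unfolding orthogonal_transformation_def T_def
  proof
    show "linear (\<lambda>y. Phi (R (Psi y)))"
    proof -
      have "linear (Phi \<circ> (R \<circ> Psi))"
        using linear_Phi linear_Psi orthogonal_transformation_linear[OF R]
        by (intro linear_compose) auto
      then show ?thesis by (simp add: o_def)
    qed
    show "\<forall>v w. Phi (R (Psi v)) \<bullet> Phi (R (Psi w)) = v \<bullet> w"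
      using R by (metis inner_Psi Psi_Phi orthogonal_transformation_def)
  qed
  have RPsi: "R \<circ> Psi = Psi \<circ> T" by (simp add: T_def fun_eq_iff)
  have "distr lborel borel R = distr (distr (lborel :: (real^('n wo)) measure) borel Psi) borel R"
    by (simp add: distr_Psi)
  also have "\<dots> = distr lborel borel (R \<circ> Psi)"
    using R by (simp add: distr_distr)
  also have "\<dots> = distr lborel borel (Psi \<circ> T)" by (simp add: RPsi)
  also have "\<dots> = distr (distr lborel borel T) borel Psi"
    using T by (simp add: distr_distr)
  also have "\<dots> = lborel" by (simp add: distr_orth_wo[OF T] distr_Psi)
  finally show ?thesis .
qed




abbreviation "Om \<equiv> (ball (0::real^'n::finite) 1 - {0})"
definition Nz :: "real^'n::finite \<Rightarrow> real^'n" where "Nz x = x /\<^sub>R norm x"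

lemma Nz_measurable[measurable]: "Nz \<in> borel_measurable borel"
  unfolding Nz_def by measurable

lemma Om_sets[measurable]: "Om \<in> sets borel" by measurable

lemma space_sphere_surface: "space (sphere_surface :: (real^'n::finite) measure) = sphere 0 1"
  by (simp add: sphere_surface_def space_restrict_space)

lemma sets_sphere_surface: "sets (sphere_surface :: (real^'n::finite) measure) = sets (restrict_space borel (sphere 0 1))"
  by (simp add: sphere_surface_def)

lemma Nz_meas_restr:
  "(\<lambda>x. x /\<^sub>R norm x) \<in> measurable (restrict_space lborel (Om :: (real^'n::finite) set)) (restrict_space borel (sphere 0 1))"
proof (rule measurable_restrict_space2)
  show "(\<lambda>x. x /\<^sub>R norm x) \<in> space (restrict_space lborel (Om :: (real^'n::finite) set)) \<rightarrow> sphere 0 1"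
  proof
    fix x :: "real^'n" assume "x \<in> space (restrict_space lborel (Om :: (real^'n::finite) set))"
    then have "x \<noteq> 0" by (simp add: space_restrict_space)
    then show "x /\<^sub>R norm x \<in> sphere 0 1" by simp
  qed
  show "(\<lambda>x. x /\<^sub>R norm x) \<in> restrict_space lborel (Om :: (real^'n::finite) set) \<rightarrow>\<^sub>M borel"
    using Nz_measurable unfolding Nz_def by (intro measurable_restrict_space1) simp
qed

lemma sigma_integral:
  fixes g :: "real^'n::finite \<Rightarrow> real"
  assumes g: "g \<in> borel_measurable borel"
  shows "integral\<^sup>L sphere_surface g =
         integral\<^sup>L lborel (\<lambda>x. indicator (Om::(real^'n) set) x * (real CARD('n) * g (Nz x)))"
proof -
  have gm: "g \<in> borel_measurable (restrict_space borel (sphere (0::real^'n) 1))"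
    by (rule measurable_restrict_space1[OF g])
  have "integral\<^sup>L sphere_surface g =
        integral\<^sup>L (density (restrict_space lborel (Om::(real^'n) set)) (\<lambda>_. ennreal (real CARD('n)))) (\<lambda>x. g (x /\<^sub>R norm x))"
    unfolding sphere_surface_def
    by (rule integral_distr[OF _ gm]) (simp add: Nz_meas_restr)
  also have "\<dots> = integral\<^sup>L (restrict_space lborel (Om::(real^'n) set)) (\<lambda>x. real CARD('n) *\<^sub>R g (x /\<^sub>R norm x))"
  proof (rule integral_density)
    have "(\<lambda>x. g (Nz x)) \<in> borel_measurable borel" by (rule measurable_compose[OF Nz_measurable g])
    then have "(\<lambda>x. g (x /\<^sub>R norm x)) \<in> borel_measurable lborel"
      unfolding Nz_def measurable_lborel2 .
    then show "(\<lambda>x. g (x /\<^sub>R norm x)) \<in> borel_measurable (restrict_space lborel (Om::(real^'n) set))"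
      by (rule measurable_restrict_space1)
  qed simp_all
  also have "\<dots> = integral\<^sup>L lborel (\<lambda>x. indicator (Om::(real^'n) set) x *\<^sub>R (real CARD('n) *\<^sub>R g (x /\<^sub>R norm x)))"
    by (rule integral_restrict_space) simp
  also have "\<dots> = integral\<^sup>L lborel (\<lambda>x. indicator (Om::(real^'n) set) x * (real CARD('n) * g (Nz x)))"
    by (simp add: Nz_def)
  finally show ?thesis .
qed

lemma finite_sphere_surface: "finite_measure (sphere_surface :: (real^'n::finite) measure)"
proof -
  let ?D = "density (restrict_space lborel (Om::(real^'n) set)) (\<lambda>_. ennreal (real CARD('n)))"
  have "emeasure ?D (space ?D) = (\<integral>\<^sup>+x. ennreal (real CARD('n)) * indicator (space ?D) x \<partial>restrict_space lborel (Om::(real^'n) set))"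
  proof -
    have "space ?D \<in> sets (restrict_space lborel (Om::(real^'n) set))"
      by (metis sets.top sets_density space_density)
    then show ?thesis by (subst emeasure_density) auto
  qed
  also have "\<dots> = ennreal (real CARD('n)) * emeasure (restrict_space lborel (Om::(real^'n) set)) (space ?D)"
  proof -
    have "space ?D \<in> sets (restrict_space lborel (Om::(real^'n) set))"
      by (metis sets.top sets_density space_density)
    then show ?thesis by (subst nn_integral_cmult_indicator) auto
  qed
  also have "\<dots> = ennreal (real CARD('n)) * emeasure lborel (Om::(real^'n) set)"
    by (simp add: emeasure_restrict_space space_restrict_space)
  also have "\<dots> < \<infinity>"
    using emeasure_bounded_finite[OF bounded_subset[OF bounded_ball Diff_subset, of 0 1 "{0::real^'n}"]]
    by (simp add: ennreal_mult_less_top)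
  finally have "finite_measure ?D" by (intro finite_measureI) simp
  then show ?thesis unfolding sphere_surface_def by (rule finite_measure.finite_measure_distr) (simp add: Nz_meas_restr)
qed

lemma Nz_orth: "orthogonal_transformation R \<Longrightarrow> Nz (R x) = R (Nz x)"
  by (simp add: Nz_def orthogonal_transformation_norm orthogonal_transformation_scaleR)

lemma sigma_invariant:
  fixes g :: "real^'n::finite \<Rightarrow> real" and R :: "real^'n \<Rightarrow> real^'n"
  assumes g: "g \<in> borel_measurable borel" and R: "orthogonal_transformation R"
  shows "integral\<^sup>L sphere_surface (\<lambda>v. g (R v)) = integral\<^sup>L sphere_surface g"
proof -
  note Rm[measurable] = orth_measurable[OF R]
  define F where "F x = indicator (Om::(real^'n) set) x * (real CARD('n) * g (Nz x))" for x
  have Fm[measurable]: "F \<in> borel_measurable borel" unfolding F_def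
    by (intro borel_measurable_times borel_measurable_indicator measurable_compose[OF Nz_measurable g] borel_measurable_const Om_sets)
  have "integral\<^sup>L sphere_surface (\<lambda>v. g (R v)) = integral\<^sup>L lborel (\<lambda>x. F (R x))"
  proof (subst sigma_integral)
    show "(\<lambda>v. g (R v)) \<in> borel_measurable borel" by (rule measurable_compose[OF Rm g])
    have "indicator (Om::(real^'n) set) x * (real CARD('n) * g (R (Nz x))) = F (R x)" for x
    proof -
      have "R x \<in> Om \<longleftrightarrow> x \<in> Om"
      proof -
        have n: "norm (R x) = norm x" by (rule orthogonal_transformation_norm[OF R])
        have "R x = 0 \<longleftrightarrow> x = 0" by (metis n norm_eq_zero)
        with n show ?thesis by (simp add: dist_norm)
      qed
      then show ?thesis by (simp add: F_def Nz_orth[OF R] indicator_def)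
    qed
    then show "integral\<^sup>L lborel (\<lambda>x. indicator (Om::(real^'n) set) x * (real CARD('n) * g (R (Nz x)))) = integral\<^sup>L lborel (\<lambda>x. F (R x))"
      by simp
  qed
  also have "\<dots> = integral\<^sup>L (distr lborel borel R) F"
  proof -
    have Rm': "R \<in> measurable lborel borel" unfolding measurable_lborel2 by (rule Rm)
    show ?thesis by (rule integral_distr[OF Rm' Fm, symmetric])
  qed
  also have "\<dots> = integral\<^sup>L sphere_surface g"
    unfolding distr_orth[OF R] F_def sigma_integral[OF g] ..
  finally show ?thesis .
qed




lemma cont_meas:
  fixes f :: "real^'n::finite \<Rightarrow> real"
  assumes "continuous_on UNIV f"
  shows "f \<in> borel_measurable (sphere_surface :: (real^'n) measure)"
proof -
  have "f \<in> borel_measurable borel" using assms by (rule borel_measurable_continuous_onI)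
  then have "f \<in> borel_measurable (restrict_space borel (sphere (0::real^'n) 1))"
    by (rule measurable_restrict_space1)
  then show ?thesis unfolding measurable_cong_sets[OF sets_sphere_surface refl] .
qed

lemma cont_integrable:
  fixes f :: "real^'n::finite \<Rightarrow> real"
  assumes "continuous_on UNIV f"
  shows "integrable (sphere_surface :: (real^'n) measure) f"
proof -
  obtain B where B: "\<And>x. x \<in> sphere (0::real^'n) 1 \<Longrightarrow> norm (f x) \<le> B"
    using continuous_on_compact_bound[OF compact_sphere continuous_on_subset[OF assms subset_UNIV]] by metis
  show ?thesis
  proof (rule finite_measure.integrable_const_bound[OF finite_sphere_surface, where B=B])
    show "AE x in sphere_surface. norm (f x) \<le> B"
    proof (rule AE_I2)
      fix x assume "x \<in> space (sphere_surface :: (real^'n) measure)"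
      then have "x \<in> sphere 0 1" by (simp only: space_sphere_surface)
      then show "norm (f x) \<le> B" by (rule B)
    qed
    show "f \<in> borel_measurable sphere_surface" by (rule cont_meas[OF assms])
  qed
qed

definition rot :: "'n \<Rightarrow> 'n \<Rightarrow> real \<Rightarrow> real^'n::finite \<Rightarrow> real^'n" where
  "rot i j t v = (\<chi> k. if k = i then cos t * v$i - sin t * v$j else if k = j then sin t * v$i + cos t * v$j else v$k)"

lemma sum_split2:
  fixes F :: "'n::finite \<Rightarrow> real"
  assumes "i \<noteq> j"
  shows "(\<Sum>k\<in>UNIV. F k) = F i + F j + (\<Sum>k\<in>UNIV-{i,j}. F k)"
proof -
  have "(\<Sum>k\<in>UNIV. F k) = F i + (\<Sum>k\<in>UNIV-{i}. F k)"
    by (simp add: sum.remove[of UNIV i])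
  also have "(\<Sum>k\<in>UNIV-{i}. F k) = F j + (\<Sum>k\<in>UNIV-{i}-{j}. F k)"
    using assms by (subst sum.remove[of _ j]) auto
  also have "UNIV-{i}-{j} = UNIV-{i,j}" by auto
  finally show ?thesis by simp
qed

lemma rot_orth:
  assumes "i \<noteq> j"
  shows "orthogonal_transformation (rot i j t :: real^'n::finite \<Rightarrow> real^'n)"
  unfolding orthogonal_transformation_def
proof
  show "linear (rot i j t :: real^'n::finite \<Rightarrow> real^'n)"
    by (auto simp: linear_iff rot_def vec_eq_iff algebra_simps)
  show "\<forall>v w. rot i j t v \<bullet> rot i j t w = v \<bullet> (w::real^'n)"
  proof (intro allI)
    fix v w :: "real^'n"
    have r: "(\<Sum>k\<in>UNIV-{i,j}. rot i j t v $ k * rot i j t w $ k) = (\<Sum>k\<in>UNIV-{i,j}. v $ k * w $ k)"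
      by (rule sum.cong) (auto simp: rot_def)
    have e: "(cos t * v$i - sin t * v$j) * (cos t * w$i - sin t * w$j) +
             (sin t * v$i + cos t * v$j) * (sin t * w$i + cos t * w$j) = v$i * w$i + v$j * w$j"
      using sin_cos_squared_add3[of t] by algebra
    show "rot i j t v \<bullet> rot i j t w = v \<bullet> w"
      unfolding inner_vec_def
      using assms r e
      by (simp add: sum_split2[OF assms, of "\<lambda>k. rot i j t v $ k * rot i j t w $ k"]
                    sum_split2[OF assms, of "\<lambda>k. v $ k * w $ k"]) (simp add: rot_def)
  qed
qed

definition rA :: "'n \<Rightarrow> 'n \<Rightarrow> real^'n::finite \<Rightarrow> real^'n" where
  "rA i j v = (\<chi> k. if k = i then v$i else if k = j then v$j else 0)"
definition rB :: "'n \<Rightarrow> 'n \<Rightarrow> real^'n::finite \<Rightarrow> real^'n" where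
  "rB i j v = (\<chi> k. if k = i then - v$j else if k = j then v$i else 0)"

lemma rot_alt:
  assumes "i \<noteq> j"
  shows "rot i j t v = v + (cos t - 1) *\<^sub>R rA i j v + sin t *\<^sub>R rB i j v"
  using assms by (auto simp: vec_eq_iff rot_def rA_def rB_def algebra_simps)

lemma rot_vderiv:
  assumes "i \<noteq> j"
  shows "((\<lambda>t. rot i j t v) has_derivative (\<lambda>h. h *\<^sub>R ((- sin t) *\<^sub>R rA i j v + cos t *\<^sub>R rB i j v))) (at t)"
proof -
  have "((\<lambda>t. v + (cos t - 1) *\<^sub>R rA i j v + sin t *\<^sub>R rB i j v) has_vector_derivative
        (0 + (- sin t) *\<^sub>R rA i j v + cos t *\<^sub>R rB i j v)) (at t)"
    by (intro derivative_eq_intros) (auto simp: has_vector_derivative_def)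
  then show ?thesis using rot_alt[OF assms] by (simp add: has_vector_derivative_def)
qed


lemma rot_zero[simp]: "rot i j 0 v = v"
  by (simp add: rot_def vec_eq_iff)

lemma linear_rot: "linear (rot i j t)"
  by (auto simp: linear_iff rot_def vec_eq_iff algebra_simps)

lemma cont_rot: "continuous_on UNIV (rot i j t)"
  by (intro linear_continuous_on) (simp add: linear_rot linear_conv_bounded_linear[symmetric])

lemma rot_integral_zero:
  fixes f :: "real^'n::finite \<Rightarrow> real" and p :: "'n \<Rightarrow> real^'n \<Rightarrow> real"
  assumes ij: "i \<noteq> j"
    and df: "\<And>x. (f has_derivative (\<lambda>h. \<Sum>k\<in>UNIV. p k x * h$k)) (at x)"
    and cp: "\<And>k. continuous_on UNIV (p k)"
  shows "integral\<^sup>L sphere_surface (\<lambda>v. v$i * p j v - v$j * p i v) = 0"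
proof -
  let ?S = "sphere_surface :: (real^'n) measure"
  have cf: "continuous_on UNIV f"
    by (intro continuous_at_imp_continuous_on ballI has_derivative_continuous[OF df])
  have cfr: "continuous_on UNIV (\<lambda>v. f (rot i j t v))" for t
    using continuous_on_compose[OF cont_rot cf[THEN continuous_on_subset]] by (simp add: o_def)
  define D where "D t v = (- sin t) *\<^sub>R rA i j v + cos t *\<^sub>R rB i j v" for t and v :: "real^'n"
  define G where "G t v = (\<Sum>k\<in>UNIV. p k (rot i j t v) * (D t v) $ k)" for t v
  have gder: "((\<lambda>t. f (rot i j t v)) has_real_derivative G t v) (at t)" for v t
  proof -
    have "((\<lambda>t. f (rot i j t v)) has_derivative (\<lambda>h. \<Sum>k\<in>UNIV. p k (rot i j t v) * (h *\<^sub>R D t v) $ k)) (at t)"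
      using has_derivative_compose[OF rot_vderiv[OF ij] df] by (simp add: D_def)
    moreover have "(\<lambda>h. \<Sum>k\<in>UNIV. p k (rot i j t v) * (h *\<^sub>R D t v) $ k) = (*) (G t v)"
      by (auto simp: G_def sum_distrib_left algebra_simps)
    ultimately show ?thesis by (simp add: has_field_derivative_def)
  qed
  have "\<forall>k. \<exists>B. \<forall>y\<in>sphere (0::real^'n) 1. \<bar>p k y\<bar> \<le> B"
  proof
    fix k
    obtain B where "\<And>y. y \<in> sphere (0::real^'n) 1 \<Longrightarrow> norm (p k y) \<le> B"
      using continuous_on_compact_bound[OF compact_sphere continuous_on_subset[OF cp subset_UNIV]] by metis
    then show "\<exists>B. \<forall>y\<in>sphere (0::real^'n) 1. \<bar>p k y\<bar> \<le> B" by (metis real_norm_def)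
  qed
  then obtain M where M: "\<And>k y. y \<in> sphere (0::real^'n) 1 \<Longrightarrow> \<bar>p k y\<bar> \<le> M k" by metis
  define C where "C = (\<Sum>k\<in>UNIV. M k * 2)"
  have Gb: "\<bar>G t v\<bar> \<le> C" if v: "v \<in> sphere 0 1" for t v
  proof -
    have rv: "rot i j t v \<in> sphere 0 1"
      using v orthogonal_transformation_norm[OF rot_orth[OF ij]] by simp
    have vi: "\<bar>v$k\<bar> \<le> 1" for k using component_le_norm_cart[of v k] v by simp
    have Dk: "\<bar>(D t v) $ k\<bar> \<le> 2" for k
    proof -
      have a: "\<bar>rA i j v $ k\<bar> \<le> 1" using vi by (simp add: rA_def)
      have b: "\<bar>rB i j v $ k\<bar> \<le> 1" using vi by (simp add: rB_def)
      have "\<bar>(D t v) $ k\<bar> \<le> \<bar>sin t\<bar> * \<bar>rA i j v $ k\<bar> + \<bar>cos t\<bar> * \<bar>rB i j v $ k\<bar>"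
        by (simp add: D_def abs_mult[symmetric] abs_triangle_ineq4 abs_triangle_ineq[THEN order_trans])
      also have "\<dots> \<le> 1 * 1 + 1 * 1"
        by (intro add_mono mult_mono a b) (auto simp: abs_sin_le_one abs_cos_le_one)
      finally show ?thesis by simp
    qed
    have "\<bar>G t v\<bar> \<le> (\<Sum>k\<in>UNIV. \<bar>p k (rot i j t v) * (D t v) $ k\<bar>)"
      unfolding G_def by (rule sum_abs)
    also have "\<dots> \<le> C"
      unfolding C_def abs_mult
      by (intro sum_mono mult_mono M[OF rv] Dk) (auto intro: order_trans[OF abs_ge_zero M[OF rv]])
    finally show ?thesis .
  qed
  define tn where "tn m = 1 / real (Suc m)" for m
  have tn_pos: "tn m > 0" for m by (simp add: tn_def)
  define s where "s m v = (f (rot i j (tn m) v) - f v) / tn m" for m v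
  define L where "L v = v$i * p j v - v$j * p i v" for v :: "real^'n"
  have cL: "continuous_on UNIV L"
    unfolding L_def by (intro continuous_intros cp)
  have int0: "integral\<^sup>L ?S (s m) = 0" for m
  proof -
    have fm: "f \<in> borel_measurable borel" by (rule borel_measurable_continuous_onI[OF cf])
    have "integral\<^sup>L ?S (s m) = (integral\<^sup>L ?S (\<lambda>v. f (rot i j (tn m) v)) - integral\<^sup>L ?S f) / tn m"
      unfolding s_def
      using tn_pos[of m] by (simp add: integral_diff cont_integrable[OF cfr] cont_integrable[OF cf])
    also have "\<dots> = 0" by (simp add: sigma_invariant[OF fm rot_orth[OF ij]])
    finally show ?thesis .
  qed
  have lim: "(\<lambda>m. integral\<^sup>L ?S (s m)) \<longlonglongrightarrow> integral\<^sup>L ?S L"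
  proof (rule integral_dominated_convergence[where w="\<lambda>_. C"])
    show "L \<in> borel_measurable ?S" by (rule cont_meas[OF cL])
    show "s m \<in> borel_measurable ?S" for m
      unfolding s_def using tn_pos[of m] by (intro cont_meas continuous_intros cfr cf) auto
    show "integrable ?S (\<lambda>_. C)" by (rule cont_integrable) (rule continuous_on_const)
    show "AE x in ?S. (\<lambda>m. s m x) \<longlonglongrightarrow> L x"
    proof (rule AE_I2)
      fix v assume "v \<in> space ?S"
      then have v: "v \<in> sphere 0 1" by (simp only: space_sphere_surface)
      have "G 0 v = L v"
      proof -
        have "G 0 v = (\<Sum>k\<in>UNIV. p k v * (rB i j v) $ k)" by (simp add: G_def D_def)
        also have "\<dots> = L v"
          using ij by (simp add: sum_split2[OF ij] rB_def L_def algebra_simps)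
        finally show ?thesis .
      qed
      have d: "((\<lambda>h. (f (rot i j (0 + h) v) - f (rot i j 0 v)) / h) \<longlongrightarrow> L v) (at 0)"
        using gder[of v 0] unfolding DERIV_def \<open>G 0 v = L v\<close> .
      have tl: "filterlim tn (at 0) sequentially"
        unfolding filterlim_at
      proof
        show "\<forall>\<^sub>F m in sequentially. tn m \<in> UNIV \<and> tn m \<noteq> 0" using tn_pos by (simp add: less_imp_neq[symmetric])
        show "tn \<longlonglongrightarrow> 0" unfolding tn_def using LIMSEQ_inverse_real_of_nat by (simp add: inverse_eq_divide)
      qed
      from filterlim_compose[OF d tl] show "(\<lambda>m. s m v) \<longlonglongrightarrow> L v"
        by (simp add: s_def)
    qed
    show "AE x in ?S. norm (s m x) \<le> C" for m
    proof (rule AE_I2)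
      fix v assume "v \<in> space ?S"
      then have v: "v \<in> sphere 0 1" by (simp only: space_sphere_surface)
      obtain z where z: "0 < z" "z < tn m" "f (rot i j (tn m) v) - f (rot i j 0 v) = (tn m - 0) * G z v"
        using MVT2[OF tn_pos[of m], of "\<lambda>t. f (rot i j t v)" "\<lambda>t. G t v"] gder by blast
      then have "s m v = G z v" using tn_pos[of m] by (simp add: s_def)
      then show "norm (s m v) \<le> C" using Gb[OF v] by simp
    qed
  qed
  then have "(\<lambda>m. 0::real) \<longlonglongrightarrow> integral\<^sup>L ?S L" by (simp add: int0)
  then have "integral\<^sup>L ?S L = 0" by (simp add: LIMSEQ_const_iff)
  then show ?thesis unfolding L_def .
qed




definition mnm :: "('n \<Rightarrow> nat) \<Rightarrow> real^'n::finite \<Rightarrow> real" where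
  "mnm a x = (\<Prod>i\<in>UNIV. (x$i) ^ a i)"

definition deg :: "('n::finite \<Rightarrow> nat) \<Rightarrow> nat" where
  "deg a = (\<Sum>i\<in>UNIV. a i)"

definition pd :: "'n \<Rightarrow> (real^'n::finite \<Rightarrow> real) \<Rightarrow> real^'n \<Rightarrow> real" where
  "pd k f x = deriv (\<lambda>t. f (x + t *\<^sub>R axis k 1)) 0"

definition rep :: "('n \<Rightarrow> nat) set \<Rightarrow> (('n \<Rightarrow> nat) \<Rightarrow> real) \<Rightarrow> (('n \<Rightarrow> nat) \<Rightarrow> ('n \<Rightarrow> nat))
     \<Rightarrow> (real^'n::finite \<Rightarrow> real) \<Rightarrow> bool" where
  "rep A c g f \<longleftrightarrow> finite A \<and> (\<forall>x. f x = (\<Sum>a\<in>A. c a * mnm (g a) x))"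

definition pol :: "(real^'n::finite \<Rightarrow> real) \<Rightarrow> bool" where
  "pol f \<longleftrightarrow> (\<exists>A c g. rep A c g f)"

definition hp :: "nat \<Rightarrow> (real^'n::finite \<Rightarrow> real) \<Rightarrow> bool" where
  "hp d f \<longleftrightarrow> (\<exists>A c g. rep A c g f \<and> (\<forall>a\<in>A. c a \<noteq> 0 \<longrightarrow> deg (g a) = d))"

lemma prod_upd:
  fixes F :: "'n::finite \<Rightarrow> real"
  shows "(\<Prod>i\<in>UNIV. F i) = F k * (\<Prod>i\<in>UNIV-{k}. F i)"
  by (simp add: prod.remove[of UNIV k])

lemma mono_upd: "mnm (a(k := m)) x = (x$k)^m * (\<Prod>i\<in>UNIV-{k}. (x$i) ^ a i)"
proof -
  have "mnm (a(k := m)) x = (x$k)^m * (\<Prod>i\<in>UNIV-{k}. (x$i) ^ (a(k:=m)) i)"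
    unfolding mnm_def by (subst prod_upd[of _ k]) simp
  also have "(\<Prod>i\<in>UNIV-{k}. (x$i) ^ (a(k:=m)) i) = (\<Prod>i\<in>UNIV-{k}. (x$i) ^ a i)"
    by (rule prod.cong) auto
  finally show ?thesis .
qed

lemma mono_split: "mnm a x = (x$k)^(a k) * (\<Prod>i\<in>UNIV-{k}. (x$i) ^ a i)"
  using mono_upd[of a k "a k" x] by simp

lemma deg_upd: "deg (a(k := m)) + a k = deg a + m"
proof -
  have "deg (a(k := m)) = m + (\<Sum>i\<in>UNIV-{k}. (a(k:=m)) i)"
    unfolding deg_def by (simp add: sum.remove[of UNIV k])
  also have "(\<Sum>i\<in>UNIV-{k}. (a(k:=m)) i) = (\<Sum>i\<in>UNIV-{k}. a i)"
    by (rule sum.cong) auto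
  finally have 1: "deg (a(k := m)) = m + (\<Sum>i\<in>UNIV-{k}. a i)" .
  have "deg a = a k + (\<Sum>i\<in>UNIV-{k}. a i)"
    unfolding deg_def by (simp add: sum.remove[of UNIV k])
  with 1 show ?thesis by simp
qed

definition dm :: "'n \<Rightarrow> ('n \<Rightarrow> nat) \<Rightarrow> real^'n::finite \<Rightarrow> real" where
  "dm k a x = real (a k) * mnm (a(k := a k - 1)) x"

lemma nth_deriv: "((\<lambda>x::real^'n::finite. x$i) has_derivative (\<lambda>h. h$i)) (at x)"
  by (rule bounded_linear_imp_has_derivative[OF bounded_linear_vec_nth])

lemma mono_deriv:
  "(mnm a has_derivative (\<lambda>h. \<Sum>k\<in>UNIV. dm k a x * h$k)) (at x)"
proof -
  have "((\<lambda>x. \<Prod>i\<in>UNIV. (x$i) ^ a i) has_derivative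
        (\<lambda>h. \<Sum>i\<in>UNIV. (of_nat (a i) * h$i * (x$i)^(a i - 1)) * (\<Prod>j\<in>UNIV - {i}. (x$j) ^ a j))) (at x)"
    by (intro has_derivative_prod has_derivative_power nth_deriv)
  moreover have "(\<lambda>h. \<Sum>i\<in>UNIV. (of_nat (a i) * h$i * (x$i)^(a i - 1)) * (\<Prod>j\<in>UNIV - {i}. (x$j) ^ a j))
        = (\<lambda>h. \<Sum>k\<in>UNIV. dm k a x * h$k)"
    by (auto simp: dm_def mono_upd intro!: sum.cong)
  ultimately show ?thesis unfolding mnm_def[abs_def] by simp
qed

lemma rep_deriv:
  assumes "rep A c g f"
  shows "(f has_derivative (\<lambda>h. \<Sum>k\<in>UNIV. (\<Sum>a\<in>A. c a * dm k (g a) x) * h$k)) (at x)"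
proof -
  have f: "f = (\<lambda>x. \<Sum>a\<in>A. c a * mnm (g a) x)" using assms by (auto simp: rep_def)
  have "((\<lambda>x. \<Sum>a\<in>A. c a * mnm (g a) x) has_derivative
         (\<lambda>h. \<Sum>a\<in>A. c a * (\<Sum>k\<in>UNIV. dm k (g a) x * h$k))) (at x)"
    by (intro has_derivative_sum has_derivative_mult_right mono_deriv)
  moreover have "(\<lambda>h. \<Sum>a\<in>A. c a * (\<Sum>k\<in>UNIV. dm k (g a) x * h$k))
     = (\<lambda>h. \<Sum>k\<in>UNIV. (\<Sum>a\<in>A. c a * dm k (g a) x) * h$k)"
    by (auto simp: sum_distrib_left sum_distrib_right algebra_simps intro: sum.swap)
  ultimately show ?thesis by (simp add: f)
qed

lemma pd_eq:
  fixes f :: "real^'n::finite \<Rightarrow> real"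
  assumes "(f has_derivative (\<lambda>h. \<Sum>j\<in>UNIV. q j * h$j)) (at x)"
  shows "pd k f x = q k"
proof -
  have l: "((\<lambda>t::real. x + t *\<^sub>R axis k 1) has_derivative (\<lambda>t. t *\<^sub>R axis k 1)) (at 0)"
    by (intro derivative_eq_intros) auto
  have "((\<lambda>t. f (x + t *\<^sub>R axis k 1)) has_derivative (\<lambda>t. \<Sum>j\<in>UNIV. q j * (t *\<^sub>R axis k (1::real)) $ j)) (at 0)"
  proof -
    have a': "(f has_derivative (\<lambda>h. \<Sum>j\<in>UNIV. q j * h$j)) (at (x + 0 *\<^sub>R axis k 1))"
      using assms by simp
    show ?thesis by (rule has_derivative_compose[OF l a'])
  qed
  moreover have "(\<lambda>t. \<Sum>j\<in>UNIV. q j * (t *\<^sub>R axis k (1::real)) $ j) = (*) (q k)"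
    by (auto simp: axis_def if_distrib cong: if_cong)
  ultimately have "DERIV (\<lambda>t. f (x + t *\<^sub>R axis k 1)) 0 :> q k"
    by (simp add: has_field_derivative_def)
  then show ?thesis unfolding pd_def by (rule DERIV_imp_deriv)
qed


lemma pd_rep:
  assumes "rep A c g f"
  shows "pd k f = (\<lambda>x. \<Sum>a\<in>A. c a * dm k (g a) x)"
  using pd_eq[OF rep_deriv[OF assms]] by (simp add: fun_eq_iff)

lemma rep_pd:
  assumes "rep A c g f"
  shows "rep A (\<lambda>a. c a * real (g a k)) (\<lambda>a. (g a)(k := g a k - 1)) (pd k f)"
  using assms unfolding rep_def pd_rep[OF assms] dm_def by (simp add: mult.assoc)

lemma pol_pd: "pol f \<Longrightarrow> pol (pd k f)"
  unfolding pol_def using rep_pd by blast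

lemma pol_deriv:
  assumes "pol f"
  shows "(f has_derivative (\<lambda>h. \<Sum>k\<in>UNIV. pd k f x * h$k)) (at x)"
proof -
  obtain A c g where r: "rep A c g f" using assms pol_def by blast
  show ?thesis using rep_deriv[OF r] by (simp add: pd_rep[OF r])
qed

lemma pol_cont: "pol f \<Longrightarrow> continuous_on UNIV f"
  by (intro continuous_at_imp_continuous_on ballI has_derivative_continuous[OF pol_deriv])

lemma hp_pol: "hp d f \<Longrightarrow> pol f"
  unfolding hp_def pol_def by blast

lemma hp_pd:
  assumes "hp d f"
  shows "hp (d - 1) (pd k f)"
proof -
  obtain A c g where r: "rep A c g f" and dg: "\<forall>a\<in>A. c a \<noteq> 0 \<longrightarrow> deg (g a) = d"
    using assms hp_def by blast
  have "\<forall>a\<in>A. c a * real (g a k) \<noteq> 0 \<longrightarrow> deg ((g a)(k := g a k - 1)) = d - 1"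
  proof (intro ballI impI)
    fix a assume a: "a \<in> A" "c a * real (g a k) \<noteq> 0"
    then have "deg (g a) = d" "g a k > 0" using dg by auto
    then show "deg ((g a)(k := g a k - 1)) = d - 1"
      using deg_upd[of "g a" k "g a k - 1"] by simp
  qed
  then show ?thesis unfolding hp_def using rep_pd[OF r] by blast
qed

lemma mono_mulx: "x$j * mnm a x = mnm (a(j := a j + 1)) x"
  by (simp add: mono_upd mono_split[of a x j])

lemma rep_mulx:
  assumes "rep A c g f"
  shows "rep A c (\<lambda>a. (g a)(j := g a j + 1)) (\<lambda>x. x$j * f x)"
  using assms unfolding rep_def by (auto simp: sum_distrib_left mono_mulx algebra_simps)

lemma hp_mulx:
  assumes "hp d f"
  shows "hp (d + 1) (\<lambda>x. x$j * f x)"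
proof -
  obtain A c g where r: "rep A c g f" and dg: "\<forall>a\<in>A. c a \<noteq> 0 \<longrightarrow> deg (g a) = d"
    using assms hp_def by blast
  have "\<forall>a\<in>A. c a \<noteq> 0 \<longrightarrow> deg ((g a)(j := g a j + 1)) = d + 1"
  proof (intro ballI impI)
    fix a assume "a \<in> A" "c a \<noteq> 0"
    then have "deg (g a) = d" using dg by auto
    then show "deg ((g a)(j := g a j + 1)) = d + 1" using deg_upd[of "g a" j "g a j + 1"] by simp
  qed
  then show ?thesis unfolding hp_def using rep_mulx[OF r] by blast
qed

lemma homogeneous_hp:
  assumes "homogeneous_poly d f"
  shows "hp d f"
proof -
  obtain A c where "finite A" "\<forall>a\<in>A. (\<Sum>i\<in>UNIV. a i) = d"
     "\<forall>x. f x = (\<Sum>a\<in>A. c a * (\<Prod>i\<in>UNIV. (x $ i) ^ a i))"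
    using assms unfolding homogeneous_poly_def by blast
  then show ?thesis unfolding hp_def rep_def
    by (intro exI[of _ A] exI[of _ c] exI[of _ "\<lambda>a. a"]) (auto simp: deg_def mnm_def)
qed

lemma mono_neg: "mnm a (-x) = (-1)^(deg a) * mnm a x"
  unfolding mnm_def deg_def power_sum
  by (simp add: prod.distrib[symmetric] power_mult_distrib[symmetric])

lemma hp_neg:
  assumes "hp d f"
  shows "f (-x) = (-1)^d * f x"
proof -
  obtain A c g where r: "rep A c g f" and dg: "\<forall>a\<in>A. c a \<noteq> 0 \<longrightarrow> deg (g a) = d"
    using assms hp_def by blast
  have "f (-x) = (\<Sum>a\<in>A. c a * mnm (g a) (-x))" using r by (simp add: rep_def)
  also have "\<dots> = (\<Sum>a\<in>A. (-1)^d * (c a * mnm (g a) x))"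
    by (rule sum.cong) (use dg in \<open>auto simp: mono_neg\<close>)
  also have "\<dots> = (-1)^d * f x" using r by (simp add: rep_def sum_distrib_left)
  finally show ?thesis .
qed

lemma euler_mono: "(\<Sum>k\<in>UNIV. x$k * dm k a x) = real (deg a) * mnm a x"
proof -
  have "x$k * dm k a x = real (a k) * mnm a x" for k
  proof (cases "a k = 0")
    case True then show ?thesis by (simp add: dm_def)
  next
    case False
    then have "x$k * mnm (a(k := a k - 1)) x = mnm a x"
      using mono_mulx[of x k "a(k := a k - 1)"] by simp
    then show ?thesis by (simp add: dm_def)
  qed
  then show ?thesis by (simp add: deg_def sum_distrib_right)
qed

lemma euler:
  assumes "hp d f"
  shows "(\<Sum>k\<in>UNIV. x$k * pd k f x) = real d * f x"
proof -
  obtain A c g where r: "rep A c g f" and dg: "\<forall>a\<in>A. c a \<noteq> 0 \<longrightarrow> deg (g a) = d"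
    using assms hp_def by blast
  have "(\<Sum>k\<in>UNIV. x$k * pd k f x) = (\<Sum>a\<in>A. c a * (\<Sum>k\<in>UNIV. x$k * dm k (g a) x))"
    by (simp add: pd_rep[OF r] sum_distrib_left algebra_simps sum.swap[of _ UNIV])
  also have "\<dots> = (\<Sum>a\<in>A. real d * (c a * mnm (g a) x))"
    by (rule sum.cong) (use dg in \<open>auto simp: euler_mono\<close>)
  also have "\<dots> = real d * f x" using r by (simp add: rep_def sum_distrib_left)
  finally show ?thesis .
qed

lemma pd_comm:
  assumes "pol f"
  shows "pd i (pd j f) = pd j (pd i f)"
proof -
  obtain A c g where r: "rep A c g f" using assms pol_def by blast
  have e: "real (g a j) * real (((g a)(j := g a j - 1)) i) * mnm (((g a)(j := g a j - 1))(i := ((g a)(j := g a j - 1)) i - 1)) x =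
        real (g a i) * real (((g a)(i := g a i - 1)) j) * mnm (((g a)(i := g a i - 1))(j := ((g a)(i := g a i - 1)) j - 1)) x" for a x
    by (cases "i = j") (auto simp: fun_upd_twist)
  show ?thesis
    unfolding pd_rep[OF rep_pd[OF r]] dm_def
    by (rule ext, rule sum.cong) (use e in \<open>auto simp: algebra_simps\<close>)
qed

lemma pd_mulx:
  assumes "pol f"
  shows "pd k (\<lambda>x. x$j * f x) x = (if k = j then f x else 0) + x$j * pd k f x"
proof (rule pd_eq)
  have "((\<lambda>x. x$j * f x) has_derivative (\<lambda>h. h$j * f x + x$j * (\<Sum>k\<in>UNIV. pd k f x * h$k))) (at x)"
    using has_derivative_mult[OF nth_deriv pol_deriv[OF assms]] by (simp add: algebra_simps)
  moreover have "(\<lambda>h. h$j * f x + x$j * (\<Sum>k\<in>UNIV. pd k f x * h$k)) =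
      (\<lambda>h. \<Sum>k\<in>UNIV. ((if k = j then f x else 0) + x$j * pd k f x) * h$k)"
  proof
    fix h
    have e: "((if k = j then f x else 0) + x$j * pd k f x) * h$k = (if k = j then h$j * f x else 0) + x$j * (pd k f x * h$k)" for k
      by (auto simp: algebra_simps)
    show "h$j * f x + x$j * (\<Sum>k\<in>UNIV. pd k f x * h$k) = (\<Sum>k\<in>UNIV. ((if k = j then f x else 0) + x$j * pd k f x) * h$k)"
      unfolding e sum.distrib by (simp add: sum_distrib_left)
  qed
  ultimately show "((\<lambda>x. x$j * f x) has_derivative (\<lambda>h. \<Sum>k\<in>UNIV. ((if k = j then f x else 0) + x$j * pd k f x) * h$k)) (at x)"
    by simp
qed

lemma pd_sum:
  assumes "finite J" "\<And>j. j \<in> J \<Longrightarrow> pol (F j)"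
  shows "pd k (\<lambda>x. \<Sum>j\<in>J. F j x) x = (\<Sum>j\<in>J. pd k (F j) x)"
proof (rule pd_eq)
  have "((\<lambda>x. \<Sum>j\<in>J. F j x) has_derivative (\<lambda>h. \<Sum>j\<in>J. \<Sum>k\<in>UNIV. pd k (F j) x * h$k)) (at x)"
    using assms by (intro has_derivative_sum pol_deriv) auto
  then show "((\<lambda>x. \<Sum>j\<in>J. F j x) has_derivative (\<lambda>h. \<Sum>k\<in>UNIV. (\<Sum>j\<in>J. pd k (F j) x) * h$k)) (at x)"
    by (simp add: sum_distrib_right sum.swap[of _ J])
qed

lemma second_partial_eq: "second_partial f i x = pd i (pd i f) x"
proof -
  let ?g = "\<lambda>t. f (x + t *\<^sub>R axis i 1)"
  have "deriv ?g = (\<lambda>s. pd i f (x + s *\<^sub>R axis i 1))"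
  proof
    fix s
    have "deriv ?g s = deriv (\<lambda>t. ?g (t + s)) 0"
      unfolding deriv_def using DERIV_shift[of ?g _ 0 s] by simp
    also have "(\<lambda>t. ?g (t + s)) = (\<lambda>t. f (x + s *\<^sub>R axis i 1 + t *\<^sub>R axis i 1))"
      by (simp add: scaleR_add_left algebra_simps)
    finally show "deriv ?g s = pd i f (x + s *\<^sub>R axis i 1)" by (simp add: pd_def)
  qed
  then show ?thesis by (simp add: second_partial_def numeral_2_eq_2 pd_def)
qed




lemma cont_nth: "continuous_on S (\<lambda>x::real^'n::finite. x$i)"
  by (rule linear_continuous_on[OF bounded_linear_vec_nth])

lemma pol_integrable: "pol f \<Longrightarrow> integrable sphere_surface f"
  by (rule cont_integrable[OF pol_cont])

lemma star:
  fixes R :: "real^'n::finite \<Rightarrow> real"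
  assumes hR: "hp d R"
  shows "(real CARD('n) + real d - 1) * integral\<^sup>L sphere_surface (\<lambda>v. v$i * R v)
         = integral\<^sup>L sphere_surface (pd i R)"
proof -
  let ?S = "sphere_surface :: (real^'n) measure"
  have pR: "pol R" using hR by (rule hp_pol)
  define f where "f j = (\<lambda>x::real^'n. x$j * R x)" for j
  have pf: "pol (f j)" for j unfolding f_def by (rule hp_pol[OF hp_mulx[OF hR]])
  have cpd: "continuous_on UNIV (pd k g)" if "pol g" for k g using that by (intro pol_cont pol_pd)
  define I where "I j v = v$i * pd j (f j) v - v$j * pd i (f j) v" for j v
  have cI: "continuous_on UNIV (I j)" for j
    unfolding I_def by (intro continuous_intros cont_nth cpd pf)
  have Z: "integral\<^sup>L ?S (I j) = 0" for j
  proof (cases "i = j")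
    case True
    then have "I j = (\<lambda>v. 0)" by (auto simp: I_def fun_eq_iff)
    then show ?thesis by simp
  next
    case False
    show ?thesis unfolding I_def
      by (rule rot_integral_zero[OF False pol_deriv[OF pf] cpd[OF pf]])
  qed
  have "integral\<^sup>L ?S (\<lambda>v. \<Sum>j\<in>UNIV. I j v) = 0"
  proof -
    have "integral\<^sup>L ?S (\<lambda>v. \<Sum>j\<in>UNIV. I j v) = (\<Sum>j\<in>UNIV. integral\<^sup>L ?S (I j))"
      by (rule Bochner_Integration.integral_sum) (rule cont_integrable[OF cI])
    then show ?thesis by (simp add: Z)
  qed
  moreover have "(\<Sum>j\<in>UNIV. I j v) = (real CARD('n) + real d - 1) * (v$i * R v) - pd i R v"
    if v: "v \<in> space ?S" for v
  proof -
    have n1: "(\<Sum>j\<in>UNIV. v$j * v$j) = 1"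
    proof -
      have nv: "norm v = 1" using v by (simp add: space_sphere_surface)
      have "v \<bullet> v = 1" using nv by (simp add: dot_square_norm)
      then show ?thesis by (simp add: inner_vec_def)
    qed
    have "(\<Sum>j\<in>UNIV. I j v) = (\<Sum>j\<in>UNIV. v$i * R v + v$i * (v$j * pd j R v)
              - (if i = j then v$i * R v else 0) - (v$j * v$j) * pd i R v)"
      by (rule sum.cong) (simp_all only: I_def f_def pd_mulx[OF pR], auto simp: algebra_simps)
    also have "\<dots> = real CARD('n) * (v$i * R v) + v$i * (\<Sum>j\<in>UNIV. v$j * pd j R v)
              - v$i * R v - (\<Sum>j\<in>UNIV. v$j * v$j) * pd i R v"
      by (simp add: sum.distrib sum_subtractf sum_distrib_left sum_distrib_right)
    also have "\<dots> = (real CARD('n) + real d - 1) * (v$i * R v) - pd i R v"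
      by (simp add: euler[OF hR] n1 algebra_simps)
    finally show ?thesis .
  qed
  ultimately have "integral\<^sup>L ?S (\<lambda>v. (real CARD('n) + real d - 1) * (v$i * R v) - pd i R v) = 0"
    by (metis (no_types, lifting) Bochner_Integration.integral_cong)
  moreover have "integrable ?S (\<lambda>v. v$i * R v)"
    by (intro cont_integrable continuous_intros cont_nth pol_cont pR)
  moreover have "integrable ?S (pd i R)" by (intro pol_integrable pol_pd pR)
  ultimately show ?thesis by simp
qed


lemma pd_const0: "pd i (\<lambda>x. 0) x = 0"
  unfolding pd_def by (rule DERIV_imp_deriv) simp

lemma harmonic_orth:
  fixes P :: "real^'n::finite \<Rightarrow> real"
  assumes n2: "CARD('n) \<ge> 2" and hP: "hp k P" and k3: "k \<ge> 3"
    and lap: "\<And>x. (\<Sum>j\<in>UNIV. pd j (pd j P) x) = 0"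
  shows "integral\<^sup>L sphere_surface (\<lambda>v. v$i * P v) = 0"
proof -
  let ?S = "sphere_surface :: (real^'n) measure"
  let ?n = "real CARD('n)"
  have pP: "pol P" by (rule hp_pol[OF hP])
  define Q where "Q = pd i P"
  have hQ: "hp (k - 1) Q" unfolding Q_def by (rule hp_pd[OF hP])
  have pQ: "pol Q" by (rule hp_pol[OF hQ])
  have hS: "hp (k - 1 - 1) (pd j Q)" for j by (rule hp_pd[OF hQ])
  have s1: "(?n + real k - 1) * integral\<^sup>L ?S (\<lambda>v. v$i * P v) = integral\<^sup>L ?S Q"
    unfolding Q_def using star[OF hP] by simp
  have s2: "(?n + real (k - 1 - 1) - 1) * integral\<^sup>L ?S (\<lambda>v. v$j * pd j Q v) = integral\<^sup>L ?S (pd j (pd j Q))" for j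
    using star[OF hS] by simp
  have k2: "real (k - 1 - 1) = real k - 2" using k3 by simp
  have zero: "(\<Sum>j\<in>UNIV. pd j (pd j Q) x) = 0" for x
  proof -
    have "pd j (pd j Q) x = pd i (pd j (pd j P)) x" for j
    proof -
      have "pd j (pd j Q) = pd j (pd i (pd j P))" unfolding Q_def by (simp add: pd_comm[OF pP])
      also have "\<dots> = pd i (pd j (pd j P))" by (rule pd_comm[OF pol_pd[OF pP]])
      finally show ?thesis by simp
    qed
    then have "(\<Sum>j\<in>UNIV. pd j (pd j Q) x) = (\<Sum>j\<in>UNIV. pd i (pd j (pd j P)) x)" by simp
    also have "\<dots> = pd i (\<lambda>x. \<Sum>j\<in>UNIV. pd j (pd j P) x) x"
      by (rule pd_sum[symmetric]) (auto intro: pol_pd pP)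
    also have "(\<lambda>x. \<Sum>j\<in>UNIV. pd j (pd j P) x) = (\<lambda>x. 0)" using lap by simp
    finally show ?thesis by (simp add: pd_const0)
  qed
  have intpd: "integrable ?S (pd j g)" if "pol g" for j g by (intro pol_integrable pol_pd that)
  have intx: "integrable ?S (\<lambda>v. v$j * g v)" if "pol g" for j g
    by (intro cont_integrable continuous_intros cont_nth pol_cont that)
  have "(?n + real k - 3) * (\<Sum>j\<in>UNIV. integral\<^sup>L ?S (\<lambda>v. v$j * pd j Q v)) = (\<Sum>j\<in>UNIV. integral\<^sup>L ?S (pd j (pd j Q)))"
    using s2 k2 by (simp add: sum_distrib_left algebra_simps)
  also have "\<dots> = integral\<^sup>L ?S (\<lambda>x. \<Sum>j\<in>UNIV. pd j (pd j Q) x)"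
    by (rule Bochner_Integration.integral_sum[symmetric]) (intro intpd pol_pd pQ)
  also have "\<dots> = 0" by (simp add: zero)
  finally have A: "(?n + real k - 3) * (\<Sum>j\<in>UNIV. integral\<^sup>L ?S (\<lambda>v. v$j * pd j Q v)) = 0" .
  have "(\<Sum>j\<in>UNIV. integral\<^sup>L ?S (\<lambda>v. v$j * pd j Q v)) = integral\<^sup>L ?S (\<lambda>v. \<Sum>j\<in>UNIV. v$j * pd j Q v)"
    by (rule Bochner_Integration.integral_sum[symmetric]) (intro intx pol_pd pQ)
  also have "\<dots> = integral\<^sup>L ?S (\<lambda>v. real (k - 1) * Q v)" by (simp add: euler[OF hQ])
  also have "\<dots> = real (k - 1) * integral\<^sup>L ?S Q" by simp
  finally have B: "(\<Sum>j\<in>UNIV. integral\<^sup>L ?S (\<lambda>v. v$j * pd j Q v)) = real (k - 1) * integral\<^sup>L ?S Q" .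
  have pos1: "?n + real k - 3 > 0" using n2 k3 by simp
  have pos2: "real (k - 1) > 0" using k3 by simp
  have "integral\<^sup>L ?S Q = 0" using A B pos1 pos2 by simp
  moreover have "?n + real k - 1 > 0" using n2 k3 by simp
  ultimately show ?thesis using s1 by simp
qed




definition clampf :: "real \<Rightarrow> real" where "clampf t = max (-1) (min 1 t)"
definition Eo :: "real \<Rightarrow> real" where "Eo t = Kinf (clampf t) - clampf t / 4"

lemma clampf_id: "\<bar>t\<bar> \<le> 1 \<Longrightarrow> clampf t = t"
  by (auto simp: clampf_def)

lemma clampf_neg: "clampf (-t) = - clampf t"
  by (auto simp: clampf_def)

lemma clampf_bnd: "-1 \<le> clampf t \<and> clampf t \<le> 1"
  by (auto simp: clampf_def)

lemma Eo_even: "Eo (-t) = Eo t"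
proof -
  let ?s = "clampf t"
  have b: "-1 \<le> ?s" "?s \<le> 1" using clampf_bnd by auto
  have "Kinf (- ?s) - (- ?s) / 4 = Kinf ?s - ?s / 4"
    unfolding Kinf_def arccos_minus[OF b] by (simp add: field_simps)
  then show ?thesis by (simp add: Eo_def clampf_neg)
qed

lemma cont_clampf: "continuous_on S clampf"
  unfolding clampf_def by (intro continuous_intros)

lemma cont_Eo: "continuous_on S Eo"
  unfolding Eo_def Kinf_def
  by (intro continuous_intros cont_clampf) (use clampf_bnd in auto)

theorem theorem3:
  fixes Y :: "real^'n::finite \<Rightarrow> real" and k :: nat
  assumes "CARD('n) \<ge> 2"
    and "spherical_harmonic k Y"
    and "odd k" and "k \<ge> 3"
  shows "\<forall>u\<in>sphere 0 1.
           (\<integral>v. Kinf (u \<bullet> v) * Y v \<partial>(sphere_surface :: (real^'n) measure)) = 0"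
proof
  let ?S = "sphere_surface :: (real^'n) measure"
  fix u :: "real^'n" assume u: "u \<in> sphere 0 1"
  obtain P where hh: "harmonic_homogeneous_poly k P" and YP: "\<forall>v\<in>sphere 0 1. Y v = P v"
    using assms(2) unfolding spherical_harmonic_def by blast
  have hP: "hp k P" using hh unfolding harmonic_homogeneous_poly_def by (blast intro: homogeneous_hp)
  have pP: "pol P" by (rule hp_pol[OF hP])
  have lap: "(\<Sum>j\<in>UNIV. pd j (pd j P) x) = 0" for x
    using hh unfolding harmonic_homogeneous_poly_def laplacian_def second_partial_eq by blast
  have orth: "integral\<^sup>L ?S (\<lambda>v. v$i * P v) = 0" for i
    by (rule harmonic_orth[OF assms(1) hP assms(4) lap])
  define g where "g v = Eo (u \<bullet> v) * P v" for v
  have cg: "continuous_on UNIV g"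
    unfolding g_def by (intro continuous_intros pol_cont[OF pP] continuous_on_compose2[OF cont_Eo]) auto
  have gneg: "g (- v) = - g v" for v
  proof -
    have "P (- v) = - P v" using hp_neg[OF hP, of v] assms(3) by simp
    then show ?thesis by (simp add: g_def Eo_even[of "u \<bullet> v", symmetric])
  qed
  have "integral\<^sup>L ?S (\<lambda>v. g (- v)) = integral\<^sup>L ?S g"
    by (rule sigma_invariant[OF borel_measurable_continuous_onI[OF cg]])
       (simp add: orthogonal_transformation_neg[where f="\<lambda>x. x"])
  then have g0: "integral\<^sup>L ?S g = 0" by (simp add: gneg)
  have lin: "integral\<^sup>L ?S (\<lambda>v. (u \<bullet> v) * P v) = 0"
  proof -
    have "integral\<^sup>L ?S (\<lambda>v. (u \<bullet> v) * P v) = integral\<^sup>L ?S (\<lambda>v. \<Sum>i\<in>UNIV. u$i * (v$i * P v))"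
      by (simp add: inner_vec_def sum_distrib_right sum_distrib_left algebra_simps)
    also have "\<dots> = (\<Sum>i\<in>UNIV. integral\<^sup>L ?S (\<lambda>v. u$i * (v$i * P v)))"
      by (rule Bochner_Integration.integral_sum)
         (intro cont_integrable continuous_intros cont_nth pol_cont[OF pP])
    also have "\<dots> = 0" by (simp add: orth)
    finally show ?thesis .
  qed
  have "integral\<^sup>L ?S (\<lambda>v. Kinf (u \<bullet> v) * Y v) = integral\<^sup>L ?S (\<lambda>v. 1/4 * ((u \<bullet> v) * P v) + g v)"
  proof (rule Bochner_Integration.integral_cong[OF refl])
    fix v assume "v \<in> space ?S"
    then have v: "v \<in> sphere 0 1" by (simp only: space_sphere_surface)
    have "\<bar>u \<bullet> v\<bar> \<le> norm u * norm v" by (rule Cauchy_Schwarz_ineq2)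
    then have "\<bar>u \<bullet> v\<bar> \<le> 1" using u v by simp
    then have "clampf (u \<bullet> v) = u \<bullet> v" by (rule clampf_id)
    then show "Kinf (u \<bullet> v) * Y v = 1/4 * ((u \<bullet> v) * P v) + g v"
      using YP v by (simp add: g_def Eo_def algebra_simps)
  qed
  also have "\<dots> = 1/4 * integral\<^sup>L ?S (\<lambda>v. (u \<bullet> v) * P v) + integral\<^sup>L ?S g"
    by (subst Bochner_Integration.integral_add)
       (auto intro!: cont_integrable continuous_intros cont_nth pol_cont[OF pP] cg)
  also have "\<dots> = 0" by (simp add: lin g0)
  finally show "(\<integral>v. Kinf (u \<bullet> v) * Y v \<partial>?S) = 0" .
qed


end
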